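(* Let $\Omega_n=\dfrac{\pi^{n/2}}{\Gamma\left(\frac n2+1\right)}$ for $n\in\mathbb{N}_0$, and \[ r(n)=1+\frac1{2n}-\frac3{8n^2}+\frac3{16n^3},\qquad s(n)=r(n)+\frac3{128n^4}. \] Then $r(n)<\frac{\Omega_n^2}{\Omega_{n-1}\Omega_{n+1}}$ for every integer $n\ge6$, and $\frac{\Omega_n^2}{\Omega_{n-1}\Omega_{n+1}}<s(n)$ for every integer $n\ge1$.
   Context: $\Omega_n$ is the volume of the unit ball in $\mathbb{R}^n$ ($\Omega_0=1$); $\Gamma$ is Euler's gamma function. *)

theory Defs
  imports "HOL-Analysis.Analysis"
begin

definition r_fun :: "nat \<Rightarrow> real" where
  "r_fun n = 1 + 1 / (2 * real n) - 3 / (8 * real n ^ 2) + 3 / (16 * real n ^ 3)"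

definition s_fun :: "nat \<Rightarrow> real" where
  "s_fun n = r_fun n + 3 / (128 * real n ^ 4)"

end

theory Submission imports Defs "HOL-Real_Asymp.Real_Asymp" begin

lemma Gamma_mid:
  fixes x y :: real assumes "x > 0" "y > 0"
  shows "Gamma ((x+y)/2)^2 \<le> Gamma x * Gamma y"
proof -
  have gx: "Gamma x > 0" "Gamma y > 0" "Gamma ((x+y)/2) > 0" using assms by (auto intro: Gamma_real_pos)
  have "(ln \<circ> Gamma) ((1 - 1/2) *\<^sub>R x + (1/2) *\<^sub>R y) \<le> (1 - 1/2) * (ln \<circ> Gamma) x + (1/2) * (ln \<circ> Gamma) y"
    by (rule convex_onD[OF log_convex_Gamma_real]) (use assms in auto)
  hence "ln (Gamma ((x+y)/2)) \<le> (ln (Gamma x) + ln (Gamma y))/2"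
    by (simp add: field_simps)
  hence "ln (Gamma ((x+y)/2)^2) \<le> ln (Gamma x * Gamma y)"
    using gx by (simp add: ln_mult ln_realpow)
  thus ?thesis using gx by simp
qed

definition F :: "nat \<Rightarrow> real" where
  "F n = Gamma (real n/2 + 1/2) * Gamma (real n/2 + 3/2) / Gamma (real n/2+1)^2"

lemma Gp1: "x > 0 \<Longrightarrow> Gamma (x + 1) = x * Gamma (x::real)"
  by (rule Gamma_plus1) (auto elim!: nonpos_Ints_cases)

lemma F_pos: "F n > 0"
proof -
  have "Gamma (real n/2 + 1/2) > 0" "Gamma (real n/2 + 3/2) > 0" "Gamma (real n/2+1) > 0"
    by (auto intro!: Gamma_real_pos)
  thus ?thesis unfolding F_def by (intro divide_pos_pos mult_pos_pos zero_less_power) auto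
qed

lemma F_step: "F (n+2) = F n * ((real n+1)*(real n+3)/(real n+2)^2)"
proof -
  define a where "a = real n/2 + 1/2"
  define b where "b = real n/2 + 1"
  have a: "a > 0" "b > 0" by (auto simp: a_def b_def)
  have g: "Gamma a > 0" "Gamma b > 0" using a by (auto intro: Gamma_real_pos)
  have e: "real n/2 + 3/2 = a + 1" "real (n+2)/2 + 1/2 = a+1" "real (n+2)/2 + 3/2 = (a + 1) + 1"
     "real (n+2)/2 + 1 = b + 1" "real n/2 + 1/2 = a" "real n/2+1 = b"
    by (auto simp: a_def b_def field_simps)
  have Fn: "F n = Gamma a * Gamma (a+1) / Gamma b ^2" unfolding F_def e ..
  have Fn2: "F (n+2) = Gamma (a+1) * Gamma ((a+1)+1) / Gamma (b+1) ^2" unfolding F_def e ..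
  have g0: "Gamma ((a+1)+1) = (a+1) * Gamma (a+1)" by (rule Gp1) (use a in simp)
  have g1: "Gamma (a+1) = a * Gamma a" "Gamma ((a+1)+1) = (a+1) * (a * Gamma a)" "Gamma (b+1) = b * Gamma b"
    using a g0 by (simp_all add: Gp1)
  have r: "(real n+1)*(real n+3)/(real n+2)^2 = a*(a+1)/b^2" by (simp add: a_def b_def field_simps) 
  show ?thesis unfolding Fn Fn2 g1 r using a g by (simp add: field_simps power2_eq_square)
qed

lemma F_ge1: "F n \<ge> 1"
proof -
  define a where "a = real n/2 + 1/2"
  have a: "a > 0" by (auto simp: a_def)
  have "Gamma ((a + (a+1))/2)^2 \<le> Gamma a * Gamma (a+1)" using a by (intro Gamma_mid) auto
  moreover have e: "(a + (a+1))/2 = real n/2 + 1" "a + 1 = real n/2 + 3/2" by (simp_all add: a_def)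
  moreover have "Gamma (real n/2+1) > 0" by (auto intro!: Gamma_real_pos)
  ultimately show ?thesis unfolding F_def a_def[symmetric] e[symmetric]
    by simp
qed

lemma F_le: assumes "n \<ge> 1" shows "F n \<le> (real n + 1) / real n"
proof -
  define a where "a = real n/2 + 1/2"
  define c where "c = real n/2"
  have a: "a > 0" "c > 0" using assms by (auto simp: a_def c_def)
  have g: "Gamma a > 0" "Gamma c > 0" using a by (auto intro: Gamma_real_pos)
  have "Gamma ((c + (c+1))/2)^2 \<le> Gamma c * Gamma (c+1)" using a by (intro Gamma_mid) auto
  moreover have "(c + (c+1))/2 = a" by (simp add: a_def c_def)
  moreover have g1: "Gamma (c+1) = c * Gamma c" "Gamma (a+1) = a * Gamma a" using a by (simp_all add: Gp1)
  moreover have e: "real n/2 + 3/2 = a + 1" "real n/2 + 1/2 = a" "real n/2+1 = c+1"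
    by (auto simp: a_def c_def field_simps)
  have "F n = Gamma a * Gamma (a+1) / Gamma (c+1)^2" unfolding F_def e ..
  ultimately have h1: "Gamma a ^2 \<le> c * Gamma c^2" "F n = a * Gamma a^2 / (c * Gamma c)^2"
    by (simp_all add: power2_eq_square mult_ac)
  have gc: "Gamma c \<noteq> 0" using g by simp
  have "F n \<le> a * (c * Gamma c^2) / (c * Gamma c)^2" unfolding h1(2)
    using a h1(1) by (intro divide_right_mono mult_left_mono) auto
  also have "\<dots> = a / c" using a gc by (simp add: power2_eq_square field_simps)
  finally have "F n \<le> a / c" .
  thus ?thesis using assms by (simp add: a_def c_def field_simps)
qed

lemma F_lim: "F \<longlonglongrightarrow> 1"
proof (rule tendsto_sandwich[of "\<lambda>_. 1" F sequentially "\<lambda>n. (real n + 1)/real n"])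
  show "\<forall>\<^sub>F n in sequentially. 1 \<le> F n" using F_ge1 by simp
  show "\<forall>\<^sub>F n in sequentially. F n \<le> (real n + 1)/real n"
    using eventually_ge_at_top[of "1::nat"] by eventually_elim (rule F_le)
  show "(\<lambda>n. (real n + 1)/real n) \<longlonglongrightarrow> 1" by real_asymp
qed simp

lemma ratio_eq: assumes "n \<ge> 1"
  shows "unit_ball_vol (real n) ^ 2 / (unit_ball_vol (real n - 1) * unit_ball_vol (real n + 1)) = F n"
proof -
  have e: "(real n - 1)/2 + 1 = real n/2 + 1/2" "(real n + 1)/2 + 1 = real n/2 + 3/2" by (auto simp: field_simps)
  have p1: "(pi powr (real n/2))^2 = pi powr real n"
    by (simp add: power2_eq_square powr_add[symmetric])
  have p2: "pi powr ((real n - 1)/2) * pi powr ((real n + 1)/2) = pi powr real n"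
    by (simp add: powr_add[symmetric] add_divide_distrib[symmetric])
  have g: "Gamma (real n/2 + 1/2) > 0" "Gamma (real n/2 + 3/2) > 0" "Gamma (real n/2+1) > 0"
    by (auto intro!: Gamma_real_pos)
  have pp: "pi powr real n > 0" by simp
  have "unit_ball_vol (real n) ^ 2 / (unit_ball_vol (real n - 1) * unit_ball_vol (real n + 1))
     = (pi powr (real n/2))^2 / Gamma (real n/2+1)^2 /
        ((pi powr ((real n - 1)/2) * pi powr ((real n + 1)/2)) / (Gamma (real n/2 + 1/2) * Gamma (real n/2 + 3/2)))"
    unfolding unit_ball_vol_def e by (simp add: power_divide)
  also have "\<dots> = F n" unfolding p1 p2 F_def using g pp by (simp add: field_simps)
  finally show ?thesis .
qed

lemma r_alt: "n \<ge> 1 \<Longrightarrow> r_fun n = (16*real n^3 + 8*real n^2 - 6*real n + 3)/(16*real n^3)"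
  unfolding r_fun_def by (simp add: field_simps power2_eq_square power3_eq_cube)

lemma r_pos: "n \<ge> 1 \<Longrightarrow> r_fun n > 0"
proof -
  assume n: "n \<ge> 1"
  hence x: "real n \<ge> 1" by simp
  have "16*real n^3 + 8*real n^2 - 6*real n + 3 > 0"
  proof -
    have "real n^3 \<ge> real n" using x by (simp add: power3_eq_cube) (metis mult_le_cancel_right1 mult_le_one order.trans mult_left_mono less_eq_real_def zero_le_one x)
    moreover have "real n^2 \<ge> 0" by simp
    ultimately show ?thesis using x by linarith
  qed
  thus ?thesis using r_alt[OF n] x by simp
qed

lemma s_pos: "n \<ge> 1 \<Longrightarrow> s_fun n > 0"
  using r_pos[of n] unfolding s_fun_def by (intro add_pos_nonneg) auto

lemma r_key_x: fixes x::real assumes "x > 0"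
  shows "(x+2)^2 * (1 + 1 / (2 * (x+2)) - 3 / (8 * (x+2) ^ 2) + 3 / (16 * (x+2) ^ 3)) - (x+1)*(x+3) * (1 + 1 / (2 * x) - 3 / (8 * x ^ 2) + 3 / (16 * x ^ 3)) = (3*x - 18)/(16*x^3*(x+2))"
proof -
  define y where "y = x + 2"
  have y: "y > 0" using assms by (simp add: y_def)
  have 1: "y^2 * (1 + 1 / (2 * y) - 3 / (8 * y ^ 2) + 3 / (16 * y ^ 3)) = (16*y^3 + 8*y^2 - 6*y + 3)/(16*y)"
    using y by (simp add: field_simps power2_eq_square power3_eq_cube)
  have 2: "(x+1)*(x+3) * (1 + 1 / (2 * x) - 3 / (8 * x ^ 2) + 3 / (16 * x ^ 3)) = (x+1)*(x+3)*(16*x^3 + 8*x^2 - 6*x + 3)/(16*x^3)"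
    using assms by (simp add: field_simps power2_eq_square power3_eq_cube)
  have 3: "(16*y^3 + 8*y^2 - 6*y + 3)/(16*y) - (x+1)*(x+3)*(16*x^3 + 8*x^2 - 6*x + 3)/(16*x^3) = (3*x - 18)/(16*x^3*y)"
    using assms y unfolding y_def by (simp add: divide_simps) (simp add: algebra_simps power2_eq_square power3_eq_cube)
  show ?thesis using 1 2 3 unfolding y_def by simp
qed

lemma s_key_x: fixes x::real assumes "x > 0"
  shows "(x+1)*(x+3) * (1 + 1 / (2 * x) - 3 / (8 * x ^ 2) + 3 / (16 * x ^ 3) + 3 / (128 * x^4))
     - (x+2)^2 * (1 + 1 / (2 * (x+2)) - 3 / (8 * (x+2) ^ 2) + 3 / (16 * (x+2) ^ 3) + 3 / (128 * (x+2)^4))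
     = (36 + 372*x + 165*x^2)/(128*x^4*(x+2)^2)"
proof -
  define y where "y = x + 2"
  have y: "y > 0" using assms by (simp add: y_def)
  have 1: "y^2 * (1 + 1 / (2 * y) - 3 / (8 * y ^ 2) + 3 / (16 * y ^ 3) + 3 / (128 * y^4)) = (128*y^4 + 64*y^3 - 48*y^2 + 24*y + 3)/(128*y^2)"
    using y by (simp add: field_simps power2_eq_square power3_eq_cube power4_eq_xxxx)
  have 2: "(x+1)*(x+3) * (1 + 1 / (2 * x) - 3 / (8 * x ^ 2) + 3 / (16 * x ^ 3) + 3 / (128 * x^4)) = (x+1)*(x+3)*(128*x^4 + 64*x^3 - 48*x^2 + 24*x + 3)/(128*x^4)"
    using assms by (simp add: field_simps power2_eq_square power3_eq_cube power4_eq_xxxx)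
  have 3: "(x+1)*(x+3)*(128*x^4 + 64*x^3 - 48*x^2 + 24*x + 3)/(128*x^4) - (128*y^4 + 64*y^3 - 48*y^2 + 24*y + 3)/(128*y^2) = (36 + 372*x + 165*x^2)/(128*x^4*y^2)"
    using assms y unfolding y_def by (simp add: divide_simps) (simp add: algebra_simps power2_eq_square power3_eq_cube power4_eq_xxxx)
  show ?thesis using 1 2 3 unfolding y_def by simp
qed

lemma r_key: assumes "m \<ge> 1"
  shows "(real m+2)^2 * r_fun (m+2) - (real m+1)*(real m+3) * r_fun m = (3*real m - 18)/(16*real m^3*(real m+2))"
  using r_key_x[of "real m"] assms unfolding r_fun_def by (simp add: add.commute)

lemma s_key: assumes "m \<ge> 1"
  shows "(real m+1)*(real m+3) * s_fun m - (real m+2)^2 * s_fun (m+2) = (36 + 372*real m + 165*real m^2)/(128*real m^4*(real m+2)^2)"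
  using s_key_x[of "real m"] assms unfolding s_fun_def r_fun_def by (simp add: add.commute)

lemma r_lim: "r_fun \<longlonglongrightarrow> 1"
  unfolding r_fun_def by real_asymp

lemma s_lim: "s_fun \<longlonglongrightarrow> 1"
  unfolding s_fun_def r_fun_def by real_asymp

lemma sub_lim: assumes "f \<longlonglongrightarrow> (1::real)" shows "(\<lambda>k. f (n + 2*k)) \<longlonglongrightarrow> 1"
proof -
  have "strict_mono (\<lambda>k::nat. n + 2*k)" by (auto simp: strict_mono_def)
  from LIMSEQ_subseq_LIMSEQ[OF assms this] show ?thesis by (simp add: o_def)
qed

lemma low_step: assumes "m \<ge> 6"
  shows "F (m+2) / r_fun (m+2) \<le> F m / r_fun m"
    and "m \<ge> 7 \<Longrightarrow> F (m+2) / r_fun (m+2) < F m / r_fun m"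
proof -
  have m1: "m \<ge> 1" using assms by simp
  have rp: "r_fun m > 0" "r_fun (m+2) > 0" using r_pos m1 by auto
  have Fp: "F m > 0" by (rule F_pos)
  have q: "(real m+2)^2 > 0" by simp
  have d: "(real m+1)*(real m+3) * r_fun m \<le> (real m+2)^2 * r_fun (m+2)"
  proof -
    have "(3*real m - 18)/(16*real m^3*(real m+2)) \<ge> 0" using assms by (intro divide_nonneg_pos) auto
    thus ?thesis using r_key[OF m1] by linarith
  qed
  have eq: "F (m+2) / r_fun (m+2) = F m * ((real m+1)*(real m+3) * r_fun m) / ((real m+2)^2 * r_fun (m+2)) / r_fun m"
    unfolding F_step using rp q by (simp add: field_simps)
  have X: "F m * ((real m+1)*(real m+3) * r_fun m) / ((real m+2)^2 * r_fun (m+2)) \<le> F m"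
    using d Fp rp q by (simp add: divide_simps mult_left_mono)
  show "F (m+2) / r_fun (m+2) \<le> F m / r_fun m" unfolding eq
    by (rule divide_right_mono[OF X]) (use rp in simp)
  assume m7: "m \<ge> 7"
  have d': "(real m+1)*(real m+3) * r_fun m < (real m+2)^2 * r_fun (m+2)"
  proof -
    have "(3*real m - 18)/(16*real m^3*(real m+2)) > 0" using m7 by (intro divide_pos_pos) auto
    thus ?thesis using r_key[OF m1] by linarith
  qed
  have Y: "F m * ((real m+1)*(real m+3) * r_fun m) / ((real m+2)^2 * r_fun (m+2)) < F m"
    using d' Fp rp q by (simp add: divide_simps)
  show "F (m+2) / r_fun (m+2) < F m / r_fun m" unfolding eq
    by (rule divide_strict_right_mono[OF Y]) (use rp in simp)
qed

lemma low_ge: assumes "n \<ge> 6" shows "1 \<le> F n / r_fun n"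
proof -
  define h where "h k = F (n + 2*k) / r_fun (n + 2*k)" for k
  have "decseq h" unfolding decseq_Suc_iff h_def
    using low_step(1) assms by (simp add: add.assoc)
  moreover have "h \<longlonglongrightarrow> 1 / 1" unfolding h_def
    by (intro tendsto_divide sub_lim F_lim r_lim) auto
  ultimately have "1 \<le> h 0" using decseq_ge by fastforce
  thus ?thesis by (simp add: h_def)
qed

lemma lower: assumes "n \<ge> 6" shows "r_fun n < F n"
proof -
  have rp: "r_fun n > 0" using r_pos assms by simp
  have "1 < F n / r_fun n"
  proof (cases "n = 6")
    case True
    have "1 < F 8 / r_fun 8" using low_step(2)[of 8] low_ge[of 10] by simp
    also have "\<dots> \<le> F 6 / r_fun 6" using low_step(1)[of 6] by simp
    finally show ?thesis using True by simp
  next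
    case False
    thus ?thesis using low_step(2)[of n] low_ge[of "n+2"] assms by simp
  qed
  thus ?thesis using rp by (simp add: divide_simps)
qed

lemma up_step: assumes "m \<ge> 1"
  shows "F m / s_fun m < F (m+2) / s_fun (m+2)"
proof -
  have sp: "s_fun m > 0" "s_fun (m+2) > 0" using s_pos assms by auto
  have Fp: "F m > 0" by (rule F_pos)
  have q: "(real m+2)^2 > 0" by simp
  have d: "(real m+1)*(real m+3) * s_fun m > (real m+2)^2 * s_fun (m+2)"
  proof -
    have "(36 + 372*real m + 165*real m^2)/(128*real m^4*(real m+2)^2) > 0" using assms by (intro divide_pos_pos add_pos_nonneg) auto
    thus ?thesis using s_key[OF assms] by linarith
  qed
  have eq: "F (m+2) / s_fun (m+2) = F m * ((real m+1)*(real m+3) * s_fun m) / ((real m+2)^2 * s_fun (m+2)) / s_fun m"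
    unfolding F_step using sp q by (simp add: field_simps)
  have X: "F m * ((real m+1)*(real m+3) * s_fun m) / ((real m+2)^2 * s_fun (m+2)) > F m"
    using d Fp sp q by (simp add: divide_simps)
  show ?thesis unfolding eq
    by (rule divide_strict_right_mono[OF X]) (use sp in simp)
qed

lemma upper: assumes "n \<ge> 1" shows "F n < s_fun n"
proof -
  define h where "h k = F (n + 2*k) / s_fun (n + 2*k)" for k
  have "incseq h" unfolding incseq_Suc_iff h_def
    using up_step assms by (simp add: add.assoc less_imp_le)
  moreover have "h \<longlonglongrightarrow> 1 / 1" unfolding h_def
    by (intro tendsto_divide sub_lim F_lim s_lim) auto
  ultimately have "h 1 \<le> 1" using incseq_le by fastforce
  hence "F n / s_fun n < 1" using up_step[OF assms] by (simp add: h_def)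
  thus ?thesis using s_pos[OF assms] by (simp add: divide_simps)
qed

theorem theorem16:
  shows "(\<forall>n::nat. n \<ge> 6 \<longrightarrow>
            r_fun n < unit_ball_vol (real n) ^ 2 /
              (unit_ball_vol (real n - 1) * unit_ball_vol (real n + 1)))
       \<and> (\<forall>n::nat. n \<ge> 1 \<longrightarrow>
            unit_ball_vol (real n) ^ 2 /
              (unit_ball_vol (real n - 1) * unit_ball_vol (real n + 1)) < s_fun n)"
  using lower upper ratio_eq by auto

end
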